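(* Let $[X,d,m]$ be a metric random walk space with invariant and reversible measure $\nu$, $\nu(X)<+\infty$. The following are equivalent: (1) $\Delta_m$ is ergodic; (2) if $D$ is $\nu$-measurable and $\Delta_m\chi_D=0$ $\nu$-a.e., then $\chi_D$ is $\nu$-a.e. constant; (3) $P_m(D)>0$ for every $\nu$-measurable $D$ with $0<\nu(D)<\nu(X)$; (4) for every $\nu$-measurable $D$ with $0<\nu(D)<\nu(X)$, $\displaystyle\frac1{\nu(D)}\int_D\mathcal H^m_{\partial D}(x)\,d\nu(x)>-1$.
   Context: A metric random walk space $[X,d,m]$ is a Polish metric space $(X,d)$ with a family $m=(m_x)_{x\in X}$ of Borel probability measures, $x\mapsto m_x(A)$ Borel measurable, each with finite first moment. A Radon measure $\nu$ is invariant if $\nu(A)=\int_X m_x(A)d\nu(x)$ for all $\nu$-measurable $A$, reversible if $dm_x(y)d\nu(x)=dm_y(x)d\nu(y)$. Laplacian: $\Delta_m f(x)=\int_X(f(y)-f(x))dm_x(y)$ on $L^1\cap L^2(X,\nu)$; $\Delta_m$ is ergodic if $\Delta_m u=0$ implies $u$ is $\nu$-a.e. constant. The $m$-perimeter of a $\nu$-measurable $E$ is $P_m(E)=\int_E\int_{X\setminus E}dm_x(y)\,d\nu(x)$, and the $m$-mean curvature of $\partial E$ at $x\in X$ is $\mathcal H^m_{\partial E}(x)=1-2\int_E dm_x(y)=1-2m_x(E)$. *)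

theory Defs
  imports "HOL-Probability.Probability"
begin

definition metric_random_walk_space ::
  "('a::{polish_space,metric_space} \<Rightarrow> 'a measure) \<Rightarrow> bool" where
  "metric_random_walk_space m \<longleftrightarrow>
     (\<forall>x. prob_space (m x) \<and> sets (m x) = sets borel) \<and>
     (\<forall>A \<in> sets borel. (\<lambda>x. emeasure (m x) A) \<in> borel_measurable borel) \<and>
     (\<forall>x. integrable (m x) (\<lambda>y. dist x y))"

definition invariant_measure :: "('a \<Rightarrow> 'a measure) \<Rightarrow> 'a measure \<Rightarrow> bool" where
  "invariant_measure m \<nu> \<longleftrightarrow>
     (\<forall>A \<in> sets \<nu>. emeasure \<nu> A = (\<integral>\<^sup>+ x. emeasure (m x) A \<partial>\<nu>))"

text \<open>nu is reversible: the measures dm_x(y) d nu(x) and dm_y(x) d nu(y) on X \<times> X coincide.\<close>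
definition reversible_measure :: "('a \<Rightarrow> 'a measure) \<Rightarrow> 'a measure \<Rightarrow> bool" where
  "reversible_measure m \<nu> \<longleftrightarrow>
     (\<forall>C \<in> sets (\<nu> \<Otimes>\<^sub>M \<nu>).
        (\<integral>\<^sup>+ x. (\<integral>\<^sup>+ y. indicator C (x, y) \<partial>(m x)) \<partial>\<nu>) =
        (\<integral>\<^sup>+ x. (\<integral>\<^sup>+ y. indicator C (y, x) \<partial>(m x)) \<partial>\<nu>))"

definition laplacian_m :: "('a \<Rightarrow> 'a measure) \<Rightarrow> ('a \<Rightarrow> real) \<Rightarrow> 'a \<Rightarrow> real" where
  "laplacian_m m f x = (\<integral> y. (f y - f x) \<partial>(m x))"

definition ergodic_m :: "('a \<Rightarrow> 'a measure) \<Rightarrow> 'a measure \<Rightarrow> bool" where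
  "ergodic_m m \<nu> \<longleftrightarrow>
     (\<forall>u. u \<in> borel_measurable \<nu> \<and> integrable \<nu> u \<and> integrable \<nu> (\<lambda>x. (u x)\<^sup>2) \<and>
          (AE x in \<nu>. laplacian_m m u x = 0) \<longrightarrow> (\<exists>c. AE x in \<nu>. u x = c))"

definition m_perimeter :: "('a \<Rightarrow> 'a measure) \<Rightarrow> 'a measure \<Rightarrow> 'a set \<Rightarrow> ennreal" where
  "m_perimeter m \<nu> E = (\<integral>\<^sup>+ x. indicator E x * emeasure (m x) (space \<nu> - E) \<partial>\<nu>)"

definition m_mean_curvature :: "('a \<Rightarrow> 'a measure) \<Rightarrow> 'a set \<Rightarrow> 'a \<Rightarrow> real" where
  "m_mean_curvature m E x = 1 - 2 * measure (m x) E"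

end

theory Submission
  imports Defs
begin

lemma int_ind_prob: "prob_space M \<Longrightarrow> D \<in> sets M \<Longrightarrow> integrable M (indicator D :: _ \<Rightarrow> real)"
  by (simp add: finite_measure.emeasure_finite prob_space.finite_measure less_top[symmetric])

lemma int_ind_fin: "finite_measure M \<Longrightarrow> D \<in> sets M \<Longrightarrow> integrable M (indicator D :: _ \<Rightarrow> real)"
  by (simp add: finite_measure.emeasure_finite less_top[symmetric])

locale rw_ctx =
  fixes m :: "'a::{polish_space,metric_space} \<Rightarrow> 'a measure"
    and \<nu> :: "'a measure"
  assumes mrw: "metric_random_walk_space m"
    and sets_nu: "sets \<nu> = sets borel"
    and fin: "emeasure \<nu> (space \<nu>) < \<infinity>"
    and inv: "invariant_measure m \<nu>"
    and rev: "reversible_measure m \<nu>"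
begin

lemma space_nu[simp]: "space \<nu> = UNIV"
  using sets_eq_imp_space_eq[OF sets_nu] by simp

lemma prob_m: "prob_space (m x)" and sets_m[measurable_cong]: "sets (m x) = sets borel"
  using mrw unfolding metric_random_walk_space_def by auto

lemma space_m[simp]: "space (m x) = UNIV"
  using sets_eq_imp_space_eq[OF sets_m] by simp

lemma sets_nu'[measurable_cong]: "sets \<nu> = sets borel" by (rule sets_nu)

lemma fm: "finite_measure \<nu>"
  using fin by (intro finite_measureI) auto

lemma emeas_m_meas[measurable]: "A \<in> sets borel \<Longrightarrow> (\<lambda>x. emeasure (m x) A) \<in> borel_measurable \<nu>"
  using mrw unfolding metric_random_walk_space_def
  by (simp add: measurable_cong_sets[OF sets_nu refl])

lemma kernel: "m \<in> measurable \<nu> (subprob_algebra borel)"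
  by (rule measurable_subprob_algebra)
     (auto simp: prob_m prob_space_imp_subprob_space sets_m emeas_m_meas)

lemma bind_eq: "\<nu> \<bind> m = \<nu>"
proof (rule measure_eqI)
  show "sets (\<nu> \<bind> m) = sets \<nu>" using sets_m sets_nu by (simp)
  fix A assume "A \<in> sets (\<nu> \<bind> m)"
  then have A: "A \<in> sets borel" using sets_m by simp
  have "emeasure (\<nu> \<bind> m) A = \<integral>\<^sup>+x. emeasure (m x) A \<partial>\<nu>"
    by (rule emeasure_bind[OF _ kernel A]) simp
  also have "\<dots> = emeasure \<nu> A" using inv A sets_nu unfolding invariant_measure_def by simp
  finally show "emeasure (\<nu> \<bind> m) A = emeasure \<nu> A" .
qed

lemma K: assumes f: "f \<in> borel_measurable borel"
  shows "(\<integral>\<^sup>+x. \<integral>\<^sup>+y. f y \<partial>m x \<partial>\<nu>) = integral\<^sup>N \<nu> f"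
  using nn_integral_bind[OF f kernel] bind_eq by simp


lemma fmi: "finite_measure \<nu>" by (rule fm)

lemma e12:
  assumes erg: "ergodic_m m \<nu>" and D: "D \<in> sets \<nu>"
    and h: "AE x in \<nu>. laplacian_m m (indicator D) x = 0"
  shows "\<exists>c. AE x in \<nu>. (indicator D x :: real) = c"
proof -
  interpret finite_measure \<nu> by (rule fm)
  have i1: "integrable \<nu> (indicator D :: 'a \<Rightarrow> real)"
    using D by (rule int_ind_fin[OF fm])
  have sq: "(\<lambda>x. (indicator D x :: real)\<^sup>2) = indicator D"
    by (auto simp: indicator_def)
  have mb: "(indicator D :: 'a \<Rightarrow> real) \<in> borel_measurable \<nu>" using D by simp
  have "\<forall>u. u \<in> borel_measurable \<nu> \<and> integrable \<nu> u \<and> integrable \<nu> (\<lambda>x. (u x)\<^sup>2) \<and>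
          (AE x in \<nu>. laplacian_m m u x = 0) \<longrightarrow> (\<exists>c. AE x in \<nu>. u x = c)"
    using erg unfolding ergodic_m_def .
  from this[rule_format, of "indicator D"] show ?thesis using mb i1 h unfolding sq by blast
qed

lemma ind_prod: "indicator (A \<times> B) (x, y) = (indicator A x * indicator B y :: ennreal)"
  by (auto simp: indicator_def)

lemma perim_sym:
  assumes D: "D \<in> sets \<nu>"
  shows "m_perimeter m \<nu> D = m_perimeter m \<nu> (UNIV - D)"
proof -
  have Db: "D \<in> sets borel" "UNIV - D \<in> sets borel" using D sets_nu by auto
  have C: "D \<times> (UNIV - D) \<in> sets (\<nu> \<Otimes>\<^sub>M \<nu>)" using D by auto
  have 1: "(\<integral>\<^sup>+ y. indicator (D \<times> (UNIV - D)) (x, y) \<partial>m x) = indicator D x * emeasure (m x) (UNIV - D)" for x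
    using Db sets_m[of x] by (simp add: ind_prod nn_integral_cmult_indicator)
  have 2: "(\<integral>\<^sup>+ y. indicator (D \<times> (UNIV - D)) (y, x) \<partial>m x) = indicator (UNIV - D) x * emeasure (m x) D" for x
  proof -
    have "(\<integral>\<^sup>+ y. indicator (D \<times> (UNIV - D)) (y, x) \<partial>m x) = (\<integral>\<^sup>+ y. indicator (UNIV - D) x * indicator D y \<partial>m x)"
      by (intro nn_integral_cong) (auto simp: indicator_def)
    also have "\<dots> = indicator (UNIV - D) x * emeasure (m x) D"
      using Db sets_m[of x] by (simp add: nn_integral_cmult_indicator)
    finally show ?thesis .
  qed
  have "m_perimeter m \<nu> D = (\<integral>\<^sup>+ x. (\<integral>\<^sup>+ y. indicator (D \<times> (UNIV - D)) (x, y) \<partial>(m x)) \<partial>\<nu>)"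
    unfolding m_perimeter_def 1 by simp
  also have "\<dots> = (\<integral>\<^sup>+ x. (\<integral>\<^sup>+ y. indicator (D \<times> (UNIV - D)) (y, x) \<partial>(m x)) \<partial>\<nu>)"
    using rev C unfolding reversible_measure_def by blast
  also have "\<dots> = m_perimeter m \<nu> (UNIV - D)"
    unfolding m_perimeter_def 2 by (simp add: Diff_Diff_Int)
  finally show ?thesis .
qed

lemma lap_ind:
  assumes D: "D \<in> sets borel"
  shows "laplacian_m m (indicator D) x = measure (m x) D - indicator D x"
proof -
  interpret prob_space "m x" by (rule prob_m)
  have "laplacian_m m (indicator D) x = (\<integral>y. indicator D y \<partial>m x) - (\<integral>y. indicator D x \<partial>m x)"
    unfolding laplacian_m_def
    by (rule Bochner_Integration.integral_diff) (use D sets_m[of x] int_ind_prob[OF prob_m, of D x] in auto)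
  then show ?thesis using D sets_m[of x] prob_space by simp
qed

lemma perim_zero_AE:
  assumes D: "D \<in> sets \<nu>" and P: "m_perimeter m \<nu> D = 0"
  shows "AE x in \<nu>. x \<in> D \<longrightarrow> emeasure (m x) (UNIV - D) = 0"
proof -
  have Db: "D \<in> sets borel" "UNIV - D \<in> sets borel" using D sets_nu by auto
  have "AE x in \<nu>. indicator D x * emeasure (m x) (UNIV - D) = 0"
    using P unfolding m_perimeter_def
    by (subst (asm) nn_integral_0_iff_AE) (use Db D in auto)
  then show ?thesis by eventually_elim (auto simp: indicator_def)
qed

lemma e23:
  assumes e2: "\<forall>D \<in> sets \<nu>. (AE x in \<nu>. laplacian_m m (indicator D) x = 0)
               \<longrightarrow> (\<exists>c. AE x in \<nu>. (indicator D x :: real) = c)"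
    and D: "D \<in> sets \<nu>" and lo: "0 < measure \<nu> D" and hi: "measure \<nu> D < measure \<nu> (space \<nu>)"
  shows "m_perimeter m \<nu> D > 0"
proof (rule ccontr)
  interpret finite_measure \<nu> by (rule fm)
  assume "\<not> m_perimeter m \<nu> D > 0"
  then have P: "m_perimeter m \<nu> D = 0" by (simp add: zero_less_iff_neq_zero)
  have Db: "D \<in> sets borel" "UNIV - D \<in> sets borel" "UNIV - D \<in> sets \<nu>" using D sets_nu by auto
  have a1: "AE x in \<nu>. x \<in> D \<longrightarrow> emeasure (m x) (UNIV - D) = 0"
    by (rule perim_zero_AE[OF D P])
  have a2: "AE x in \<nu>. x \<in> UNIV - D \<longrightarrow> emeasure (m x) (UNIV - (UNIV - D)) = 0"
    by (rule perim_zero_AE[OF Db(3)]) (use P perim_sym[OF D] in simp)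
  have "AE x in \<nu>. laplacian_m m (indicator D) x = 0"
    using a1 a2
  proof eventually_elim
    case (elim x)
    interpret prob_space "m x" by (rule prob_m)
    show ?case
    proof (cases "x \<in> D")
      case True
      then have "measure (m x) (UNIV - D) = 0" using elim by (simp add: measure_def)
      then have "measure (m x) D = 1" using prob_compl[of D] Db sets_m[of x] by simp
      then show ?thesis using True by (simp add: lap_ind[OF Db(1)])
    next
      case False
      then have "measure (m x) D = 0" using elim by (simp add: measure_def Diff_Diff_Int)
      then show ?thesis using False by (simp add: lap_ind[OF Db(1)])
    qed
  qed
  then obtain c where c: "AE x in \<nu>. (indicator D x :: real) = c" using e2 D by blast
  show False
  proof (cases "c = 1")
    case True
    from c have "AE x in \<nu>. x \<in> D" by eventually_elim (use True in \<open>auto simp: indicator_def split: if_splits\<close>)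
    then have "emeasure \<nu> (UNIV - D) = 0" by (subst (asm) AE_iff_measurable[OF Db(3)]) auto
    then have "measure \<nu> (UNIV - D) = 0" by (simp add: measure_def)
    then show False using finite_measure_compl[OF D] hi by simp
  next
    case False
    from c have "AE x in \<nu>. x \<notin> D" by eventually_elim (use False in \<open>auto simp: indicator_def split: if_splits\<close>)
    then have "emeasure \<nu> D = 0" by (subst (asm) AE_iff_measurable[OF D]) auto
    then show False using lo by (simp add: measure_def)
  qed
qed

lemma ae_notin: assumes D: "D \<in> sets \<nu>" shows "(AE x in \<nu>. x \<notin> D) \<longleftrightarrow> measure \<nu> D = 0"
proof -
  interpret finite_measure \<nu> by (rule fm)
  have "(AE x in \<nu>. x \<notin> D) \<longleftrightarrow> emeasure \<nu> D = 0" by (rule AE_iff_measurable[OF D]) auto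
  also have "\<dots> \<longleftrightarrow> measure \<nu> D = 0" by (simp add: emeasure_eq_measure)
  finally show ?thesis .
qed

lemma ae_in: assumes D: "D \<in> sets \<nu>" shows "(AE x in \<nu>. x \<in> D) \<longleftrightarrow> measure \<nu> D = measure \<nu> (space \<nu>)"
proof -
  interpret finite_measure \<nu> by (rule fm)
  have D': "UNIV - D \<in> sets \<nu>" using D by (metis sets.compl_sets space_nu)
  have "(AE x in \<nu>. x \<in> D) \<longleftrightarrow> (AE x in \<nu>. x \<notin> UNIV - D)" by simp
  also have "\<dots> \<longleftrightarrow> measure \<nu> (UNIV - D) = 0" by (rule ae_notin[OF D'])
  also have "\<dots> \<longleftrightarrow> measure \<nu> D = measure \<nu> (space \<nu>)" using finite_measure_compl[OF D] by auto
  finally show ?thesis .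
qed

lemma mxD_meas[measurable]: "D \<in> sets borel \<Longrightarrow> (\<lambda>x. measure (m x) D) \<in> borel_measurable \<nu>"
  unfolding measure_def by (intro borel_measurable_enn2real emeas_m_meas)

lemma bnd_int: "f \<in> borel_measurable \<nu> \<Longrightarrow> (\<And>x. \<bar>f x\<bar> \<le> B) \<Longrightarrow> integrable \<nu> (f :: _ \<Rightarrow> real)"
  by (rule finite_measure.integrable_const_bound[OF fm, where B=B]) auto

lemma mxD_int: assumes D: "D \<in> sets borel" shows "integrable \<nu> (\<lambda>x. measure (m x) D)"
proof (rule finite_measure.integrable_const_bound[OF fm, where B=1])
  show "AE x in \<nu>. norm (measure (m x) D) \<le> 1"
    by (intro AE_I2) (simp add: prob_space.prob_le_1[OF prob_m])
qed (use D in simp)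

lemma perim_real:
  assumes D: "D \<in> sets \<nu>"
  shows "m_perimeter m \<nu> D = ennreal (measure \<nu> D - (\<integral>x\<in>D. measure (m x) D \<partial>\<nu>))"
proof -
  interpret finite_measure \<nu> by (rule fm)
  have Db: "D \<in> sets borel" using D sets_nu by simp
  have pt: "indicator D x * emeasure (m x) (UNIV - D) = ennreal (indicator D x * (1 - measure (m x) D))" for x
  proof -
    interpret p: prob_space "m x" by (rule prob_m)
    have "emeasure (m x) (UNIV - D) = ennreal (1 - measure (m x) D)"
      using p.prob_compl[of D] Db sets_m[of x] by (simp add: p.emeasure_eq_measure)
    then show ?thesis by (auto simp: indicator_def)
  qed
  have ii: "integrable \<nu> (\<lambda>x. indicator D x * (1 - measure (m x) D))"
    by (rule bnd_int[where B=1]) (use D Db in \<open>auto simp: indicator_def prob_space.prob_le_1[OF prob_m]\<close>)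
  have i2: "integrable \<nu> (\<lambda>x. indicator D x * measure (m x) D)"
    by (rule bnd_int[where B=1]) (use D Db in \<open>auto simp: indicator_def prob_space.prob_le_1[OF prob_m]\<close>)
  have "m_perimeter m \<nu> D = (\<integral>\<^sup>+x. ennreal (indicator D x * (1 - measure (m x) D)) \<partial>\<nu>)"
    unfolding m_perimeter_def space_nu pt by simp
  also have "\<dots> = ennreal (\<integral>x. indicator D x * (1 - measure (m x) D) \<partial>\<nu>)"
    by (rule nn_integral_eq_integral[OF ii]) (auto intro!: AE_I2 simp: prob_space.prob_le_1[OF prob_m])
  also have "(\<integral>x. indicator D x * (1 - measure (m x) D) \<partial>\<nu>) = (\<integral>x. indicator D x - indicator D x * measure (m x) D \<partial>\<nu>)"
    by (simp add: algebra_simps)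
  also have "\<dots> = measure \<nu> D - (\<integral>x. indicator D x * measure (m x) D \<partial>\<nu>)"
    by (subst Bochner_Integration.integral_diff)
       (use D Db int_ind_fin[OF fm D] i2 in auto)
  finally show ?thesis by (simp add: set_lebesgue_integral_def)
qed

lemma curv_int:
  assumes D: "D \<in> sets \<nu>"
  shows "(\<integral>x\<in>D. m_mean_curvature m D x \<partial>\<nu>) = measure \<nu> D - 2 * (\<integral>x\<in>D. measure (m x) D \<partial>\<nu>)"
proof -
  interpret finite_measure \<nu> by (rule fm)
  have Db: "D \<in> sets borel" using D sets_nu by simp
  have i2: "integrable \<nu> (\<lambda>x. indicator D x * measure (m x) D)"
    by (rule bnd_int[where B=1]) (use D Db in \<open>auto simp: indicator_def prob_space.prob_le_1[OF prob_m]\<close>)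
  have "(\<integral>x\<in>D. m_mean_curvature m D x \<partial>\<nu>) = (\<integral>x. indicator D x - 2 * (indicator D x * measure (m x) D) \<partial>\<nu>)"
    unfolding set_lebesgue_integral_def m_mean_curvature_def by (simp add: algebra_simps)
  also have "\<dots> = measure \<nu> D - 2 * (\<integral>x. indicator D x * measure (m x) D \<partial>\<nu>)"
    using int_ind_fin[OF fm D] i2 D by simp
  finally show ?thesis by (simp add: set_lebesgue_integral_def)
qed

lemma e34:
  assumes D: "D \<in> sets \<nu>" and lo: "0 < measure \<nu> D"
  shows "m_perimeter m \<nu> D > 0 \<longleftrightarrow> (1 / measure \<nu> D) * (\<integral>x\<in>D. m_mean_curvature m D x \<partial>\<nu>) > -1"
proof -
  define a where "a = (\<integral>x\<in>D. measure (m x) D \<partial>\<nu>)"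
  have "m_perimeter m \<nu> D > 0 \<longleftrightarrow> a < measure \<nu> D"
    unfolding perim_real[OF D] a_def[symmetric] by simp
  also have "\<dots> \<longleftrightarrow> (1 / measure \<nu> D) * (measure \<nu> D - 2 * a) > -1"
    using lo by (simp add: field_simps)
  finally show ?thesis unfolding curv_int[OF D] a_def .
qed

lemma kmeas: "f \<in> borel_measurable borel \<Longrightarrow> (\<lambda>x. \<integral>\<^sup>+y. f y \<partial>m x) \<in> borel_measurable \<nu>"
  using measurable_compose[OF kernel nn_integral_measurable_subprob_algebra] by blast

lemma harm_const:
  assumes um: "u \<in> borel_measurable \<nu>" and ui: "integrable \<nu> u" and u2: "integrable \<nu> (\<lambda>x. (u x)\<^sup>2)"
    and h: "AE x in \<nu>. laplacian_m m u x = 0"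
  shows "AE x in \<nu>. AE y in m x. u y = u x"
proof -
  have ub[measurable]: "u \<in> borel_measurable borel" using um measurable_cong_sets[OF sets_nu refl] by simp
  have umx: "u \<in> borel_measurable (m x)" for x using ub measurable_cong_sets[OF sets_m refl] by simp
  have fin1: "AE x in \<nu>. (\<integral>\<^sup>+y. ennreal (norm (u y)) \<partial>m x) \<noteq> \<infinity>"
  proof (rule nn_integral_PInf_AE)
    show "(\<lambda>x. \<integral>\<^sup>+y. ennreal (norm (u y)) \<partial>m x) \<in> borel_measurable \<nu>" by (rule kmeas) simp
    have "(\<integral>\<^sup>+x. \<integral>\<^sup>+y. ennreal (norm (u y)) \<partial>m x \<partial>\<nu>) = (\<integral>\<^sup>+x. ennreal (norm (u x)) \<partial>\<nu>)" by (rule K) simp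
    also have "\<dots> < \<infinity>" using ui by (simp add: integrable_iff_bounded)
    finally show "(\<integral>\<^sup>+x. \<integral>\<^sup>+y. ennreal (norm (u y)) \<partial>m x \<partial>\<nu>) \<noteq> \<infinity>" by simp
  qed
  have fin2: "AE x in \<nu>. (\<integral>\<^sup>+y. ennreal (norm ((u y)\<^sup>2)) \<partial>m x) \<noteq> \<infinity>"
  proof (rule nn_integral_PInf_AE)
    show "(\<lambda>x. \<integral>\<^sup>+y. ennreal (norm ((u y)\<^sup>2)) \<partial>m x) \<in> borel_measurable \<nu>" by (rule kmeas) simp
    have "(\<integral>\<^sup>+x. \<integral>\<^sup>+y. ennreal (norm ((u y)\<^sup>2)) \<partial>m x \<partial>\<nu>) = (\<integral>\<^sup>+x. ennreal (norm ((u x)\<^sup>2)) \<partial>\<nu>)" by (rule K) simp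
    also have "\<dots> < \<infinity>" using u2 by (simp add: integrable_iff_bounded)
    finally show "(\<integral>\<^sup>+x. \<integral>\<^sup>+y. ennreal (norm ((u y)\<^sup>2)) \<partial>m x \<partial>\<nu>) \<noteq> \<infinity>" by simp
  qed
  have good: "AE x in \<nu>. integrable (m x) u \<and> integrable (m x) (\<lambda>y. (u y)\<^sup>2) \<and> laplacian_m m u x = 0"
    using fin1 fin2 h
  proof eventually_elim
    case (elim x)
    have m2: "(\<lambda>y. (u y)\<^sup>2) \<in> borel_measurable (m x)" using umx[of x] by measurable
    show ?case using elim umx[of x] m2 unfolding integrable_iff_bounded by (simp add: less_top[symmetric])
  qed
  define F where "F x = (\<integral>\<^sup>+y. ennreal ((u y - u x)\<^sup>2) \<partial>m x)" for x
  have Fm[measurable]: "F \<in> borel_measurable \<nu>" unfolding F_def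
    by (rule nn_integral_measurable_subprob_algebra2[OF _ kernel]) measurable
  have eq: "AE x in \<nu>. F x + ennreal ((u x)\<^sup>2) = (\<integral>\<^sup>+y. ennreal ((u y)\<^sup>2) \<partial>m x)"
    using good
  proof eventually_elim
    case (elim x)
    interpret p: prob_space "m x" by (rule prob_m)
    have i1: "integrable (m x) u" and i2: "integrable (m x) (\<lambda>y. (u y)\<^sup>2)" and l0: "laplacian_m m u x = 0"
      using elim by auto
    have "laplacian_m m u x = (\<integral>y. u y \<partial>m x) - (\<integral>y. u x \<partial>m x)"
      unfolding laplacian_m_def by (rule Bochner_Integration.integral_diff[OF i1]) simp
    then have lap: "(\<integral>y. u y \<partial>m x) = u x" using l0 p.prob_space by simp
    have ex: "(\<lambda>y. (u y - u x)\<^sup>2) = (\<lambda>y. (u y)\<^sup>2 - 2 * u x * u y + (u x)\<^sup>2)"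
      by (auto simp: power2_eq_square algebra_simps)
    have i1': "integrable (m x) (\<lambda>y. 2 * u x * u y)" using i1 by simp
    have i3: "integrable (m x) (\<lambda>y. (u y - u x)\<^sup>2)" unfolding ex using i1' i2 by simp
    have "(\<integral>y. (u y - u x)\<^sup>2 \<partial>m x) = (\<integral>y. (u y)\<^sup>2 \<partial>m x) - 2 * u x * (\<integral>y. u y \<partial>m x) + (u x)\<^sup>2"
      unfolding ex using i1 i1' i2 p.prob_space by simp
    then have E: "(\<integral>y. (u y - u x)\<^sup>2 \<partial>m x) = (\<integral>y. (u y)\<^sup>2 \<partial>m x) - (u x)\<^sup>2"
      unfolding lap by (simp add: power2_eq_square)
    have Fx: "F x = ennreal (\<integral>y. (u y - u x)\<^sup>2 \<partial>m x)"
      unfolding F_def by (rule nn_integral_eq_integral[OF i3]) simp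
    have G: "(\<integral>\<^sup>+y. ennreal ((u y)\<^sup>2) \<partial>m x) = ennreal (\<integral>y. (u y)\<^sup>2 \<partial>m x)"
      by (rule nn_integral_eq_integral[OF i2]) simp
    have nn: "0 \<le> (\<integral>y. (u y - u x)\<^sup>2 \<partial>m x)" by (rule integral_nonneg_AE) simp
    show ?case unfolding Fx G using nn E by (simp add: ennreal_plus[symmetric] del: ennreal_plus)
  qed
  have I: "(\<integral>\<^sup>+x. ennreal ((u x)\<^sup>2) \<partial>\<nu>) \<noteq> \<infinity>"
    using u2 by (simp add: integrable_iff_bounded less_top[symmetric])
  have "(\<integral>\<^sup>+x. ennreal ((u x)\<^sup>2) \<partial>\<nu>) + (\<integral>\<^sup>+x. F x \<partial>\<nu>) = (\<integral>\<^sup>+x. F x + ennreal ((u x)\<^sup>2) \<partial>\<nu>)"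
    by (subst nn_integral_add) (auto simp: add.commute)
  also have "\<dots> = (\<integral>\<^sup>+x. \<integral>\<^sup>+y. ennreal ((u y)\<^sup>2) \<partial>m x \<partial>\<nu>)" by (rule nn_integral_cong_AE[OF eq])
  also have "\<dots> = (\<integral>\<^sup>+x. ennreal ((u x)\<^sup>2) \<partial>\<nu>) + 0" by (subst K) simp_all
  finally have "(\<integral>\<^sup>+x. F x \<partial>\<nu>) = 0" using I by (simp add: ennreal_add_left_cancel)
  then have "AE x in \<nu>. F x = 0" by (simp add: nn_integral_0_iff_AE)
  then show ?thesis
  proof eventually_elim
    case (elim x)
    have "AE y in m x. ennreal ((u y - u x)\<^sup>2) = 0"
      using elim unfolding F_def by (subst (asm) nn_integral_0_iff_AE) (use umx[of x] in simp_all)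
    then show ?case by eventually_elim simp
  qed
qed

lemma level_perim:
  assumes ub: "u \<in> borel_measurable borel" and h: "AE x in \<nu>. AE y in m x. u y = u x"
    and S: "S \<in> sets borel"
  shows "m_perimeter m \<nu> (u -` S) = 0"
proof -
  have Db: "u -` S \<in> sets borel" using measurable_sets[OF ub S] by simp
  have "m_perimeter m \<nu> (u -` S) = (\<integral>\<^sup>+x. 0 \<partial>\<nu>)"
    unfolding m_perimeter_def space_nu
  proof (rule nn_integral_cong_AE)
    show "AE x in \<nu>. indicator (u -` S) x * emeasure (m x) (UNIV - u -` S) = 0"
      using h
    proof eventually_elim
      case (elim x)
      show ?case
      proof (cases "x \<in> u -` S")
        case True
        have "AE y in m x. y \<notin> UNIV - u -` S" using elim by eventually_elim (use True in auto)
        then have "emeasure (m x) (UNIV - u -` S) = 0"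
          by (subst (asm) AE_iff_measurable[where N="UNIV - u -` S"]) (use Db sets_m[of x] in auto)
        then show ?thesis by simp
      qed simp
    qed
  qed
  then show ?thesis by simp
qed

lemma e31:
  assumes e3: "\<forall>D \<in> sets \<nu>. 0 < measure \<nu> D \<and> measure \<nu> D < measure \<nu> (space \<nu>)
               \<longrightarrow> m_perimeter m \<nu> D > 0"
  shows "ergodic_m m \<nu>"
  unfolding ergodic_m_def
proof (intro allI impI, elim conjE)
  interpret finite_measure \<nu> by (rule fm)
  fix u :: "'a \<Rightarrow> real"
  assume um: "u \<in> borel_measurable \<nu>" and ui: "integrable \<nu> u" and u2: "integrable \<nu> (\<lambda>x. (u x)\<^sup>2)"
    and h: "AE x in \<nu>. laplacian_m m u x = 0"
  have ub[measurable]: "u \<in> borel_measurable borel" using um measurable_cong_sets[OF sets_nu refl] by simp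
  have hh: "AE x in \<nu>. AE y in m x. u y = u x" by (rule harm_const[OF um ui u2 h])
  have dich: "measure \<nu> (u -` S) = 0 \<or> measure \<nu> (u -` S) = measure \<nu> (space \<nu>)" if S: "S \<in> sets borel" for S
  proof -
    have D: "u -` S \<in> sets \<nu>" using measurable_sets[OF ub S] sets_nu by simp
    have "\<not> m_perimeter m \<nu> (u -` S) > 0" using level_perim[OF ub hh S] by simp
    then have "\<not> (0 < measure \<nu> (u -` S) \<and> measure \<nu> (u -` S) < measure \<nu> (space \<nu>))" using e3 D by blast
    moreover have "measure \<nu> (u -` S) \<le> measure \<nu> (space \<nu>)" using D by (intro finite_measure_mono) auto
    moreover have "0 \<le> measure \<nu> (u -` S)" by simp
    ultimately show ?thesis by linarith
  qed
  show "\<exists>c. AE x in \<nu>. u x = c"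
  proof (cases "measure \<nu> (space \<nu>) = 0")
    case True
    then have "emeasure \<nu> UNIV = 0" by (simp add: emeasure_eq_measure)
    then have "AE x in \<nu>. False" by (subst AE_iff_measurable[where N=UNIV]) auto
    then have "AE x in \<nu>. u x = 0" by eventually_elim simp
    then show ?thesis by blast
  next
    case False
    define \<mu> where "\<mu> = measure \<nu> (space \<nu>)"
    have mpos: "0 < \<mu>" using False unfolding \<mu>_def by (simp add: zero_less_measure_iff)
    define c where "c = (\<integral>x. u x \<partial>\<nu>) / \<mu>"
    have ic: "(\<integral>x. c \<partial>\<nu>) = (\<integral>x. u x \<partial>\<nu>)" using mpos unfolding c_def \<mu>_def by simp
    have enz: "emeasure \<nu> (space \<nu>) \<noteq> 0" using mpos unfolding \<mu>_def by (simp add: emeasure_eq_measure)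
    have D1: "u -` {c<..} \<in> sets \<nu>" and D2: "u -` {..<c} \<in> sets \<nu>"
      using measurable_sets[OF ub, of "{c<..}"] measurable_sets[OF ub, of "{..<c}"] sets_nu by auto
    have n1: "AE x in \<nu>. x \<notin> u -` {c<..}"
    proof -
      have "measure \<nu> (u -` {c<..}) = 0"
      proof (rule ccontr)
        assume "measure \<nu> (u -` {c<..}) \<noteq> 0"
        then have "measure \<nu> (u -` {c<..}) = measure \<nu> (space \<nu>)" using dich[of "{c<..}"] by auto
        then have "AE x in \<nu>. x \<in> u -` {c<..}" using ae_in[OF D1] by simp
        then have "AE x in \<nu>. c < u x" by simp
        then have "(\<integral>x. c \<partial>\<nu>) < (\<integral>x. u x \<partial>\<nu>)"
          by (intro integral_less_AE_space[OF _ ui _ enz]) auto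
        then show False using ic by simp
      qed
      then show ?thesis using ae_notin[OF D1] by simp
    qed
    have n2: "AE x in \<nu>. x \<notin> u -` {..<c}"
    proof -
      have "measure \<nu> (u -` {..<c}) = 0"
      proof (rule ccontr)
        assume "measure \<nu> (u -` {..<c}) \<noteq> 0"
        then have "measure \<nu> (u -` {..<c}) = measure \<nu> (space \<nu>)" using dich[of "{..<c}"] by auto
        then have "AE x in \<nu>. x \<in> u -` {..<c}" using ae_in[OF D2] by simp
        then have "AE x in \<nu>. u x < c" by simp
        then have "(\<integral>x. u x \<partial>\<nu>) < (\<integral>x. c \<partial>\<nu>)"
          by (intro integral_less_AE_space[OF ui _ _ enz]) auto
        then show False using ic by simp
      qed
      then show ?thesis using ae_notin[OF D2] by simp
    qed
    from n1 n2 have "AE x in \<nu>. u x = c" by eventually_elim auto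
    then show ?thesis by blast
  qed
qed

end

theorem theorem2p24:
  fixes m :: "'a::{polish_space,metric_space} \<Rightarrow> 'a measure"
    and \<nu> :: "'a measure"
  assumes mrw: "metric_random_walk_space m"
    and sets_nu: "sets \<nu> = sets borel"
    and fin: "emeasure \<nu> (space \<nu>) < \<infinity>"
    and inv: "invariant_measure m \<nu>"
    and rev: "reversible_measure m \<nu>"
  shows "(ergodic_m m \<nu> \<longleftrightarrow>
           (\<forall>D \<in> sets \<nu>. (AE x in \<nu>. laplacian_m m (indicator D) x = 0)
               \<longrightarrow> (\<exists>c. AE x in \<nu>. (indicator D x :: real) = c)))
       \<and> (ergodic_m m \<nu> \<longleftrightarrow>
           (\<forall>D \<in> sets \<nu>. 0 < measure \<nu> D \<and> measure \<nu> D < measure \<nu> (space \<nu>)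
               \<longrightarrow> m_perimeter m \<nu> D > 0))
       \<and> (ergodic_m m \<nu> \<longleftrightarrow>
           (\<forall>D \<in> sets \<nu>. 0 < measure \<nu> D \<and> measure \<nu> D < measure \<nu> (space \<nu>)
               \<longrightarrow> (1 / measure \<nu> D) * (\<integral>x\<in>D. m_mean_curvature m D x \<partial>\<nu>) > -1))"
proof -
  interpret rw_ctx m \<nu> using assms by (unfold_locales) auto
  define E1 where "E1 = ergodic_m m \<nu>"
  define E2 where "E2 = (\<forall>D \<in> sets \<nu>. (AE x in \<nu>. laplacian_m m (indicator D) x = 0)
               \<longrightarrow> (\<exists>c. AE x in \<nu>. (indicator D x :: real) = c))"
  define E3 where "E3 = (\<forall>D \<in> sets \<nu>. 0 < measure \<nu> D \<and> measure \<nu> D < measure \<nu> (space \<nu>)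
               \<longrightarrow> m_perimeter m \<nu> D > 0)"
  define E4 where "E4 = (\<forall>D \<in> sets \<nu>. 0 < measure \<nu> D \<and> measure \<nu> D < measure \<nu> (space \<nu>)
               \<longrightarrow> (1 / measure \<nu> D) * (\<integral>x\<in>D. m_mean_curvature m D x \<partial>\<nu>) > -1)"
  have 12: "E1 \<Longrightarrow> E2" unfolding E1_def E2_def using e12 by blast
  have 23: "E2 \<Longrightarrow> E3" unfolding E3_def E2_def using e23 by blast
  have 31: "E3 \<Longrightarrow> E1" unfolding E3_def E1_def using e31 by blast
  have 34: "E3 \<longleftrightarrow> E4" unfolding E3_def E4_def using e34 by blast
  have "(E1 \<longleftrightarrow> E2) \<and> (E1 \<longleftrightarrow> E3) \<and> (E1 \<longleftrightarrow> E4)" using 12 23 31 34 by blast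
  then show ?thesis unfolding E1_def E2_def E3_def E4_def .
qed

end
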